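(* Every continuous-variable PR box (as defined in the context) is an extreme point of the convex set $\mathcal M_{\mathrm{NS}}$ of no-signaling behaviours; i.e., if $\boldsymbol\mu\in\mathcal M_{\mathrm{PR}}$ and $\boldsymbol\mu=q\boldsymbol\mu^*+(1-q)\boldsymbol\mu'$ with $\boldsymbol\mu^*,\boldsymbol\mu'\in\mathcal M_{\mathrm{NS}}$ and $0\le q\le1$, then either $q=1$ and $\boldsymbol\mu^*=\boldsymbol\mu$, or $q=0$ and $\boldsymbol\mu'=\boldsymbol\mu$ (or $\boldsymbol\mu^*=\boldsymbol\mu'=\boldsymbol\mu$).
   Context: A behaviour is a family $\boldsymbol\mu=(\mu_{x,y})_{x,y\in\{0,1\}}$ of Borel probability measures on $\mathbb R\times\mathbb R$; convex combinations are taken componentwise. It is no-signaling if $\mu_{x,0}(A\times\mathbb R)=\mu_{x,1}(A\times\mathbb R)$ for all $x\in\{0,1\}$ and Borel $A\subseteq\mathbb R$, and $\mu_{0,y}(\mathbb R\times B)=\mu_{1,y}(\mathbb R\times B)$ for all $y\in\{0,1\}$ and Borel $B$; $\mathcal M_{\mathrm{NS}}$ denotes the set of no-signaling behaviours. For $(a,b)\in\mathbb R^2$, $\delta_{a,b}$ is the Dirac measure at $(a,b)$. A CV PR box of order $k\in\mathbb N$ is a behaviour of the form $\mu_{x,y}=\frac1k\sum_{j=1}^k\delta_{a_{x,j},\,b_{y,[j+xy]_k}}$, where for each $x,y\in\{0,1\}$, $\boldsymbol a_x=(a_{x,1},\dots,a_{x,k})\in\mathbb R^k$ and $\boldsymbol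 b_y=(b_{y,1},\dots,b_{y,k})\in\mathbb R^k$ each have pairwise distinct components, and $[\,\cdot\,]_k$ denotes reduction modulo $k$ to an index in $\{1,\dots,k\}$. $\mathcal M_{\mathrm{PR}}$ is the set of all CV PR boxes of all orders $k\in\mathbb N$ (for $k=1$ these are the deterministic behaviours $\mu_{x,y}=\delta_{a_x,b_y}$). *)

theory Defs
  imports "HOL-Probability.Probability"
begin

text \<open>A behaviour: a family of Borel probability measures on R x R indexed by
  inputs x, y in {0,1} (encoded as bool, False = 0, True = 1).\<close>

type_synonym behaviour = "bool \<Rightarrow> bool \<Rightarrow> (real \<times> real) measure"

definition is_behaviour :: "behaviour \<Rightarrow> bool" where
  "is_behaviour \<mu> \<longleftrightarrow>
     (\<forall>x y. prob_space (\<mu> x y) \<and> sets (\<mu> x y) = sets (borel :: (real \<times> real) measure))"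

definition no_signaling :: "behaviour \<Rightarrow> bool" where
  "no_signaling \<mu> \<longleftrightarrow> is_behaviour \<mu> \<and>
     (\<forall>x. \<forall>A \<in> sets (borel :: real measure).
        measure (\<mu> x False) (A \<times> UNIV) = measure (\<mu> x True) (A \<times> UNIV)) \<and>
     (\<forall>y. \<forall>B \<in> sets (borel :: real measure).
        measure (\<mu> False y) (UNIV \<times> B) = measure (\<mu> True y) (UNIV \<times> B))"

definition mod_idx :: "nat \<Rightarrow> nat \<Rightarrow> nat" where
  "mod_idx k n = ((n + k - 1) mod k) + 1"

text \<open>CV PR box of order k: mu_{x,y} = (1/k) sum_{j=1..k} delta_{(a_{x,j}, b_{y,[j+xy]_k})}.\<close>
definition is_cv_pr_box_order :: "nat \<Rightarrow> behaviour \<Rightarrow> bool" where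
  "is_cv_pr_box_order k \<mu> \<longleftrightarrow> k \<ge> 1 \<and> is_behaviour \<mu> \<and>
     (\<exists>a b :: bool \<Rightarrow> nat \<Rightarrow> real.
        (\<forall>x. inj_on (a x) {1..k}) \<and> (\<forall>y. inj_on (b y) {1..k}) \<and>
        (\<forall>x y. \<forall>S \<in> sets (borel :: (real \<times> real) measure).
           measure (\<mu> x y) S =
             (1 / real k) * (\<Sum>j = 1..k.
                indicator S (a x j, b y (mod_idx k (j + of_bool x * of_bool y))))))"

definition is_cv_pr_box :: "behaviour \<Rightarrow> bool" where
  "is_cv_pr_box \<mu> \<longleftrightarrow> (\<exists>k. is_cv_pr_box_order k \<mu>)"

definition convex_comb :: "real \<Rightarrow> behaviour \<Rightarrow> behaviour \<Rightarrow> behaviour \<Rightarrow> bool" where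
  "convex_comb q \<mu>1 \<mu>2 \<mu> \<longleftrightarrow>
     (\<forall>x y. \<forall>S \<in> sets (borel :: (real \<times> real) measure).
        measure (\<mu> x y) S = q * measure (\<mu>1 x y) S + (1 - q) * measure (\<mu>2 x y) S)"

end

theory Submission
  imports Defs
begin

lemma behaviour_eqI:
  assumes "is_behaviour \<mu>" "is_behaviour \<nu>"
    and "\<forall>x y. \<forall>S \<in> sets (borel :: (real \<times> real) measure). measure (\<mu> x y) S = measure (\<nu> x y) S"
  shows "\<mu> = \<nu>"
proof (intro ext)
  fix x y
  have p1: "prob_space (\<mu> x y)" and s1: "sets (\<mu> x y) = sets borel"
    and p2: "prob_space (\<nu> x y)" and s2: "sets (\<nu> x y) = sets borel"
    using assms(1,2) unfolding is_behaviour_def by auto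
  show "\<mu> x y = \<nu> x y"
  proof (rule measure_eqI)
    show "sets (\<mu> x y) = sets (\<nu> x y)" using s1 s2 by simp
    fix A assume "A \<in> sets (\<mu> x y)"
    then have "A \<in> sets borel" using s1 by simp
    then show "emeasure (\<mu> x y) A = emeasure (\<nu> x y) A"
      using assms(3) finite_measure.emeasure_eq_measure[OF prob_space.finite_measure[OF p1]]
        finite_measure.emeasure_eq_measure[OF prob_space.finite_measure[OF p2]]
      by simp
  qed
qed

lemma mi_range: "k \<ge> 1 \<Longrightarrow> mod_idx k n \<in> {1..k}"
  unfolding mod_idx_def by (auto simp: Suc_le_eq)

lemma mi0: "j \<in> {1..k} \<Longrightarrow> mod_idx k j = j"
  unfolding mod_idx_def
proof -
  assume j: "j \<in> {1..k}"
  then have e: "j + k - 1 = (j - 1) + k" by auto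
  have "j - 1 < k" using j by auto
  then have "((j - 1) + k) mod k = j - 1" by (simp only: mod_add_self2 mod_less)
  then have "(j + k - 1) mod k = j - 1" unfolding e .
  then show "(j + k - 1) mod k + 1 = j" using j by auto
qed

lemma mi1: "j \<in> {1..k} \<Longrightarrow> m \<in> {2..k} \<Longrightarrow> mod_idx k (j + 1) = m \<longleftrightarrow> j = m - 1"
proof -
  assume j: "j \<in> {1..k}" and m: "m \<in> {2..k}"
  have e: "j + 1 + k - 1 = j + k" by simp
  show ?thesis
  proof (cases "j < k")
    case True
    then have "mod_idx k (j+1) = j + 1" unfolding mod_idx_def e by simp
    then show ?thesis using m by auto
  next
    case False
    then have "j = k" using j by auto
    then have "mod_idx k (j+1) = 1" unfolding mod_idx_def e by simp
    then show ?thesis using m j False by auto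
  qed
qed

lemma borel_fin: "finite (F :: (real \<times> real) set) \<Longrightarrow> F \<in> sets borel"
  by (simp add: borel_closed finite_imp_closed)

lemma borel_A: "{a::real} \<times> UNIV \<in> sets borel"
  by (intro borel_closed closed_Times) auto

lemma borel_B: "UNIV \<times> {a::real} \<in> sets borel"
  by (intro borel_closed closed_Times) auto


lemma extreme:
  fixes \<mu> \<nu> :: behaviour and a b :: "bool \<Rightarrow> nat \<Rightarrow> real" and k :: nat and q :: real
  assumes k: "k \<ge> 1"
    and ia: "\<forall>x. inj_on (a x) {1..k}" and ib: "\<forall>y. inj_on (b y) {1..k}"
    and muform: "\<forall>x y. \<forall>S \<in> sets (borel :: (real \<times> real) measure).
           measure (\<mu> x y) S =
             (1 / real k) * (\<Sum>j = 1..k.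
                indicator S (a x j, b y (mod_idx k (j + of_bool x * of_bool y))))"
    and bmu: "is_behaviour \<mu>" and ns: "no_signaling \<nu>" and q: "q > 0"
    and le: "\<forall>x y. \<forall>S \<in> sets (borel :: (real \<times> real) measure). q * measure (\<nu> x y) S \<le> measure (\<mu> x y) S"
  shows "\<nu> = \<mu>"
proof -
  define pt where "pt x y j = (a x j, b y (mod_idx k (j + of_bool x * of_bool y)))" for x y j
  define P where "P x y j = measure (\<nu> x y) {pt x y j}" for x y j
  have bnu: "is_behaviour \<nu>" using ns unfolding no_signaling_def by simp
  have fin: "finite_measure (\<nu> x y)" and snu: "sets (\<nu> x y) = sets borel" for x y
    using bnu unfolding is_behaviour_def by (simp_all add: prob_space.finite_measure)
  have ptinj: "inj_on (pt x y) {1..k}" for x y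
  proof (rule inj_onI)
    fix j j' assume j: "j \<in> {1..k}" "j' \<in> {1..k}" and e: "pt x y j = pt x y j'"
    then have "a x j = a x j'" unfolding pt_def by simp
    then show "j = j'" using ia j inj_onD by metis
  qed
  have sumform: "measure (\<nu> x y) S = (\<Sum>j = 1..k. indicator S (pt x y j) * P x y j)"
    if S: "S \<in> sets borel" for x y S
  proof -
    let ?F = "pt x y ` {1..k}"
    have Fb: "?F \<in> sets borel" by (rule borel_fin) auto
    have cb: "UNIV - ?F \<in> sets borel" using Fb by auto
    have "measure (\<mu> x y) (UNIV - ?F) = (1 / real k) * (\<Sum>j = 1..k. indicator (UNIV - ?F) (pt x y j))"
      using muform cb unfolding pt_def by blast
    also have "(\<Sum>j = 1..k. indicator (UNIV - ?F) (pt x y j)) = (0::real)"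
      by (intro sum.neutral ballI) (simp add: indicator_def)
    finally have "measure (\<mu> x y) (UNIV - ?F) = 0" by simp
    then have "q * measure (\<nu> x y) (UNIV - ?F) \<le> 0" using le cb by metis
    then have z: "measure (\<nu> x y) (UNIV - ?F) = 0"
      using q by (simp add: mult_le_0_iff measure_nonneg antisym)
    have "measure (\<nu> x y) (S - ?F) \<le> measure (\<nu> x y) (UNIV - ?F)"
      using finite_measure.finite_measure_mono[OF fin, where A="S - ?F" and B="UNIV - ?F"] cb snu by auto
    then have z2: "measure (\<nu> x y) (S - ?F) = 0" using z by (simp add: antisym measure_nonneg)
    have "measure (\<nu> x y) S = measure (\<nu> x y) (S \<inter> ?F) + measure (\<nu> x y) (S - ?F)"
      using finite_measure.finite_measure_Union[OF fin, where A="S \<inter> ?F" and B="S - ?F"] S Fb snu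
      by (simp add: sets.Int sets.Diff Int_Diff_disjoint Int_Diff_Un)
    also have "\<dots> = measure (\<nu> x y) (S \<inter> ?F)" using z2 by simp
    also have "\<dots> = (\<Sum>p\<in>S \<inter> ?F. measure (\<nu> x y) {p})"
      using finite_measure.finite_measure_eq_sum_singleton[OF fin, where S="S \<inter> ?F"] snu
      by (simp add: borel_fin)
    also have "\<dots> = (\<Sum>p\<in>?F. indicator S p * measure (\<nu> x y) {p})"
      by (rule sum.mono_neutral_cong_left) (auto simp: indicator_def)
    also have "\<dots> = (\<Sum>j = 1..k. indicator S (pt x y j) * P x y j)"
      unfolding P_def by (subst sum.reindex[OF ptinj]) simp
    finally show ?thesis .
  qed
  have alice: "measure (\<nu> x y) ({a x j} \<times> UNIV) = P x y j" if j: "j \<in> {1..k}" for x y j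
  proof -
    have "measure (\<nu> x y) ({a x j} \<times> UNIV) = (\<Sum>j' = 1..k. (if j' = j then P x y j' else 0))"
      unfolding sumform[OF borel_A]
    proof (intro sum.cong refl)
      fix j' assume j': "j' \<in> {1..k}"
      have "a x j' = a x j \<longleftrightarrow> j' = j" using ia j j' unfolding inj_on_def by metis
      then show "indicator ({a x j} \<times> UNIV) (pt x y j') * P x y j' = (if j' = j then P x y j' else 0)"
        unfolding pt_def by (simp add: indicator_def)
    qed
    also have "\<dots> = P x y j" using j by (simp add: sum.delta)
    finally show ?thesis .
  qed
  have bob: "measure (\<nu> x y) (UNIV \<times> {b y m}) = (\<Sum>j = 1..k. (if mod_idx k (j + of_bool x * of_bool y) = m then P x y j else 0))"
    if m: "m \<in> {1..k}" for x y m
    unfolding sumform[OF borel_B]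
  proof (intro sum.cong refl)
    fix j assume j: "j \<in> {1..k}"
    have "mod_idx k (j + of_bool x * of_bool y) \<in> {1..k}" using mi_range k by blast
    then have "b y (mod_idx k (j + of_bool x * of_bool y)) = b y m \<longleftrightarrow> mod_idx k (j + of_bool x * of_bool y) = m"
      using ib m unfolding inj_on_def by metis
    then show "indicator (UNIV \<times> {b y m}) (pt x y j) * P x y j = (if mod_idx k (j + of_bool x * of_bool y) = m then P x y j else 0)"
      unfolding pt_def by (simp add: indicator_def)
  qed
  have bob0: "measure (\<nu> x y) (UNIV \<times> {b y m}) = P x y m" if m: "m \<in> {1..k}" and xy: "\<not> (x \<and> y)" for x y m
  proof -
    have "measure (\<nu> x y) (UNIV \<times> {b y m}) = (\<Sum>j = 1..k. (if j = m then P x y j else 0))"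
      unfolding bob[OF m] using xy by (intro sum.cong refl) (auto simp: mi0)
    then show ?thesis using m by (simp add: sum.delta)
  qed
  have bob1: "measure (\<nu> True True) (UNIV \<times> {b True m}) = P True True (m - 1)" if m: "m \<in> {2..k}" for m
  proof -
    have m1: "m \<in> {1..k}" using m by auto
    have "measure (\<nu> True True) (UNIV \<times> {b True m}) = (\<Sum>j = 1..k. (if j = m - 1 then P True True j else 0))"
      unfolding bob[OF m1] by (intro sum.cong refl) (use mi1 m in auto)
    then show ?thesis using m by (auto simp: sum.delta)
  qed
  have nsA: "measure (\<nu> x False) (A \<times> UNIV) = measure (\<nu> x True) (A \<times> UNIV)" if "A \<in> sets borel" for x A
    using ns that unfolding no_signaling_def by blast
  have nsB: "measure (\<nu> False y) (UNIV \<times> B) = measure (\<nu> True y) (UNIV \<times> B)" if "B \<in> sets borel" for y B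
    using ns that unfolding no_signaling_def by blast
  define f where "f = P False False"
  have A: "P x False j = P x True j" if "j \<in> {1..k}" for x j
    using nsA[of "{a x j}" x] alice[OF that] by simp
  have B0: "P False False m = P True False m" if "m \<in> {1..k}" for m
    using nsB[of "{b False m}" False] bob0[OF that] by simp
  have B1: "P False True m = P True True (m - 1)" if "m \<in> {2..k}" for m
    using nsB[of "{b True m}" True] bob0[of m False True] bob1[OF that] that by simp
  have allf: "P x y j = f j" if "j \<in> {1..k}" for x y j
    using A B0 that unfolding f_def by (cases x; cases y) auto
  have step: "f m = f (m - 1)" if "m \<in> {2..k}" for m
  proof -
    have "m - 1 \<in> {1..k}" "m \<in> {1..k}" using that by auto
    then show ?thesis using B1[OF that] allf by metis
  qed
  have const: "f m = f 1" if "m \<in> {1..k}" for m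
    using that
  proof (induction m)
    case 0 then show ?case by simp
  next
    case (Suc n)
    show ?case
    proof (cases "n = 0")
      case True then show ?thesis by simp
    next
      case False
      then have "Suc n \<in> {2..k}" "n \<in> {1..k}" using Suc.prems by auto
      then show ?thesis using step[of "Suc n"] Suc.IH by simp
    qed
  qed
  have allc: "P x y j = f 1" if "j \<in> {1..k}" for x y j
    using allf[OF that] const[OF that] by simp
  have "1 = measure (\<nu> False False) UNIV"
  proof -
    have "prob_space (\<nu> False False)" using bnu unfolding is_behaviour_def by simp
    moreover have "space (\<nu> False False) = UNIV"
      using sets_eq_imp_space_eq[OF snu[of False False]] by simp
    ultimately show ?thesis using prob_space.prob_space by metis
  qed
  also have "\<dots> = (\<Sum>j = 1..k. f 1)"
    unfolding sumform[OF sets.top[of borel, unfolded space_borel]]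
    by (intro sum.cong refl) (use allc in auto)
  also have "\<dots> = real k * f 1" by simp
  finally have f1: "f 1 = 1 / real k" using k by (simp add: field_simps)
  show ?thesis
  proof (rule behaviour_eqI[OF bnu bmu], intro allI ballI)
    fix x y and S :: "(real \<times> real) set" assume S: "S \<in> sets borel"
    have "measure (\<nu> x y) S = (\<Sum>j = 1..k. indicator S (pt x y j) * (1 / real k))"
      unfolding sumform[OF S] by (intro sum.cong refl) (use allc f1 in auto)
    also have "\<dots> = (1 / real k) * (\<Sum>j = 1..k. indicator S (pt x y j))"
      by (simp add: sum_distrib_left mult.commute)
    also have "\<dots> = measure (\<mu> x y) S"
      using muform S unfolding pt_def by (metis (no_types, lifting))
    finally show "measure (\<nu> x y) S = measure (\<mu> x y) S" .
  qed
qed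


theorem mainTheorem2:
  fixes \<mu> \<mu>s \<mu>' :: behaviour and q :: real
  assumes "is_cv_pr_box \<mu>"
    and "no_signaling \<mu>s" and "no_signaling \<mu>'"
    and "0 \<le> q" and "q \<le> 1"
    and "convex_comb q \<mu>s \<mu>' \<mu>"
  shows "(q = 1 \<and> \<mu>s = \<mu>) \<or> (q = 0 \<and> \<mu>' = \<mu>) \<or> (\<mu>s = \<mu> \<and> \<mu>' = \<mu>)"
proof -
  obtain k where kb: "is_cv_pr_box_order k \<mu>" using assms(1) unfolding is_cv_pr_box_def by blast
  then have k: "k \<ge> 1" and bmu: "is_behaviour \<mu>" unfolding is_cv_pr_box_order_def by auto
  obtain a b :: "bool \<Rightarrow> nat \<Rightarrow> real" where ia: "\<forall>x. inj_on (a x) {1..k}" and ib: "\<forall>y. inj_on (b y) {1..k}"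
    and muform: "\<forall>x y. \<forall>S \<in> sets (borel :: (real \<times> real) measure).
           measure (\<mu> x y) S =
             (1 / real k) * (\<Sum>j = 1..k.
                indicator S (a x j, b y (mod_idx k (j + of_bool x * of_bool y))))"
    using kb unfolding is_cv_pr_box_order_def by blast
  have b1: "is_behaviour \<mu>s" and b2: "is_behaviour \<mu>'"
    using assms(2,3) unfolding no_signaling_def by auto
  have cc: "\<forall>x y. \<forall>S \<in> sets (borel :: (real \<times> real) measure).
        measure (\<mu> x y) S = q * measure (\<mu>s x y) S + (1 - q) * measure (\<mu>' x y) S"
    using assms(6) unfolding convex_comb_def by blast
  show ?thesis
  proof (cases "q = 1")
    case True
    have "\<mu>s = \<mu>" by (rule behaviour_eqI[OF b1 bmu]) (use cc True in simp)
    then show ?thesis using True by simp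
  next
    case q1: False
    show ?thesis
    proof (cases "q = 0")
      case True
      have "\<mu>' = \<mu>" by (rule behaviour_eqI[OF b2 bmu]) (use cc True in simp)
      then show ?thesis using True by simp
    next
      case False
      have qp: "q > 0" and qp2: "1 - q > 0" using False q1 assms(4,5) by auto
      have le1: "\<forall>x y. \<forall>S \<in> sets (borel :: (real \<times> real) measure). q * measure (\<mu>s x y) S \<le> measure (\<mu> x y) S"
        using cc qp2 by (simp add: measure_nonneg)
      have le2: "\<forall>x y. \<forall>S \<in> sets (borel :: (real \<times> real) measure). (1 - q) * measure (\<mu>' x y) S \<le> measure (\<mu> x y) S"
        using cc qp by (simp add: measure_nonneg)
      have "\<mu>s = \<mu>" by (rule extreme[OF k ia ib muform bmu assms(2) qp le1])
      moreover have "\<mu>' = \<mu>" by (rule extreme[OF k ia ib muform bmu assms(3) qp2 le2])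
      ultimately show ?thesis by simp
    qed
  qed
qed

end
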